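(* Let $F$ be any function from syntax trees to the reals that takes at most $k$ distinct values, and let $T_{init}$ be the number of nodes of the initial tree. Then for both SMO-GP-single and SMO-GP-multi applied to MO-$F(X)=(F(X),C(X))$, the expected number of iterations until the population contains the empty tree is $O(k\,T_{init})$.
   Context: Fix an integer $n\ge 1$; the terminal set is $T=\{x_1,\bar x_1,\dots,x_n,\bar x_n\}$. A syntax tree is either the empty tree or a rooted ordered binary tree whose inner nodes are all labelled by the binary function $J$ (join, exactly two ordered children) and whose leaves are labelled by elements of $T$. The complexity $C(X)$ is the number of nodes of $X$ (0 for the empty tree). In MO-$F$, $F$ is to be maximized and $C$ minimized. Mutation (HVL-Prime applied $k'$ times): each application chooses uniformly at random one of three operations. Substitute: replace a uniformly random leaf by a uniformly random $u\in T$. Insert: choose a uniformly random node $v$ and uniformly random $u\in T$, replace $v$ by a $J$-node with children $u$ and $v$ in uniformly random order (inserting into the empty tree yields the single leaf $u$). Delete: choose a uniformly random leaf $v$ with parent $p$ and sibling $u$, replace $p$ by $u$ (deleting $p$ and $v$; deleting the only leaf of a one-leaf tree yields the empty tree). For single-operation mutation $k'=1$; for multi-operation mutation $k'=1+\mathrm{Pois}(1)$ with $\mathrm{Pois}(1)$ a Poisson random variable with mean 1. Dominance: $Y\succeq X$ iff $F(Y)\ge F(X)$ and $C(Y)\le C(X)$; $Y\succ X$ iff $Y\succeq X$ and ($F(Y)>F(X)$ or $C(Y)<C(X)$). SMO-GP: choose an initial tree $X$ and set $P:=\{X\}$; repeat: choose $X\in P$ uniformly at random, let $Y$ be a mutated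 copy of $X$; if no $Z\in P$ satisfies $Z\succ Y$, set $P:=(P\setminus\{Z\in P: Y\succeq Z\})\cup\{Y\}$. SMO-GP-single uses single-operation mutation, SMO-GP-multi multi-operation mutation. *)

theory Defs
  imports "HOL-Probability.Probability"
begin

text \<open>Terminals: x_i is (i, True), its negation is (i, False), for 1 \<le> i \<le> n.\<close>
type_synonym lit = "nat \<times> bool"

definition terminals :: "nat \<Rightarrow> lit set" where
  "terminals n = {1..n} \<times> UNIV"

datatype tr = Leaf lit | J tr tr

text \<open>Syntax trees: None is the empty tree.\<close>
type_synonym stree = "tr option"

fun lits_tr :: "tr \<Rightarrow> lit set" where
  "lits_tr (Leaf u) = {u}"
| "lits_tr (J l r) = lits_tr l \<union> lits_tr r"

definition valid :: "nat \<Rightarrow> stree \<Rightarrow> bool" where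
  "valid n X = (case X of None \<Rightarrow> True | Some t \<Rightarrow> lits_tr t \<subseteq> terminals n)"

fun nnodes :: "tr \<Rightarrow> nat" where
  "nnodes (Leaf u) = 1"
| "nnodes (J l r) = 1 + nnodes l + nnodes r"

definition C :: "stree \<Rightarrow> nat" where
  "C X = (case X of None \<Rightarrow> 0 | Some t \<Rightarrow> nnodes t)"

text \<open>Node positions as paths (False = left child, True = right child).\<close>
fun pos :: "tr \<Rightarrow> bool list set" where
  "pos (Leaf u) = {[]}"
| "pos (J l r) = {[]} \<union> Cons False ` pos l \<union> Cons True ` pos r"

fun leafpos :: "tr \<Rightarrow> bool list set" where
  "leafpos (Leaf u) = {[]}"
| "leafpos (J l r) = Cons False ` leafpos l \<union> Cons True ` leafpos r"

fun subtree :: "tr \<Rightarrow> bool list \<Rightarrow> tr" where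
  "subtree t [] = t"
| "subtree (J l r) (False # p) = subtree l p"
| "subtree (J l r) (True # p) = subtree r p"
| "subtree (Leaf u) (b # p) = Leaf u"

fun replace :: "tr \<Rightarrow> bool list \<Rightarrow> tr \<Rightarrow> tr" where
  "replace t [] s = s"
| "replace (J l r) (False # p) s = J (replace l p s) r"
| "replace (J l r) (True # p) s = J l (replace r p s)"
| "replace (Leaf u) (b # p) s = Leaf u"

definition substitute_op :: "nat \<Rightarrow> stree \<Rightarrow> stree pmf" where
  "substitute_op n X = (case X of
      None \<Rightarrow> return_pmf None
    | Some t \<Rightarrow>
        do { p \<leftarrow> pmf_of_set (leafpos t);
             u \<leftarrow> pmf_of_set (terminals n);
             return_pmf (Some (replace t p (Leaf u))) })"

definition insert_op :: "nat \<Rightarrow> stree \<Rightarrow> stree pmf" where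
  "insert_op n X = (case X of
      None \<Rightarrow> map_pmf (\<lambda>u. Some (Leaf u)) (pmf_of_set (terminals n))
    | Some t \<Rightarrow>
        do { p \<leftarrow> pmf_of_set (pos t);
             u \<leftarrow> pmf_of_set (terminals n);
             b \<leftarrow> bernoulli_pmf (1/2);
             return_pmf (Some (replace t p
               (if b then J (Leaf u) (subtree t p) else J (subtree t p) (Leaf u)))) })"

text \<open>Delete: choose a uniformly random leaf v with parent p and sibling u, replace p by u;
  deleting the only leaf of a one-leaf tree yields the empty tree
  (the empty tree has no leaf and is left unchanged).\<close>
definition delete_op :: "stree \<Rightarrow> stree pmf" where
  "delete_op X = (case X of
      None \<Rightarrow> return_pmf None
    | Some t \<Rightarrow>
        do { p \<leftarrow> pmf_of_set (leafpos t);
             return_pmf (if p = [] then None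
               else Some (replace t (butlast p) (subtree t (butlast p @ [\<not> last p])))) })"

definition hvl_prime :: "nat \<Rightarrow> stree \<Rightarrow> stree pmf" where
  "hvl_prime n X = do { op \<leftarrow> pmf_of_set {0::nat, 1, 2};
      (if op = 0 then substitute_op n X else if op = 1 then insert_op n X else delete_op X) }"

fun hvl_iter :: "nat \<Rightarrow> nat \<Rightarrow> stree \<Rightarrow> stree pmf" where
  "hvl_iter n 0 X = return_pmf X"
| "hvl_iter n (Suc k) X = bind_pmf (hvl_prime n X) (hvl_iter n k)"

definition mutate_single :: "nat \<Rightarrow> stree \<Rightarrow> stree pmf" where
  "mutate_single n X = hvl_iter n 1 X"

definition mutate_multi :: "nat \<Rightarrow> stree \<Rightarrow> stree pmf" where
  "mutate_multi n X = bind_pmf (poisson_pmf 1) (\<lambda>j. hvl_iter n (1 + j) X)"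

definition weakly_dom :: "(stree \<Rightarrow> real) \<Rightarrow> stree \<Rightarrow> stree \<Rightarrow> bool" where
  "weakly_dom F Y X \<longleftrightarrow> F Y \<ge> F X \<and> C Y \<le> C X"

definition strictly_dom :: "(stree \<Rightarrow> real) \<Rightarrow> stree \<Rightarrow> stree \<Rightarrow> bool" where
  "strictly_dom F Y X \<longleftrightarrow> weakly_dom F Y X \<and> (F Y > F X \<or> C Y < C X)"

definition smo_step :: "(stree \<Rightarrow> stree pmf) \<Rightarrow> (stree \<Rightarrow> real) \<Rightarrow> stree set \<Rightarrow> stree set pmf" where
  "smo_step mut F P = do { X \<leftarrow> pmf_of_set P; Y \<leftarrow> mut X;
      return_pmf (if \<exists>Z\<in>P. strictly_dom F Z Y then P
                   else {Z \<in> P. \<not> weakly_dom F Y Z} \<union> {Y}) }"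

definition stopped_step :: "(stree \<Rightarrow> stree pmf) \<Rightarrow> (stree \<Rightarrow> real) \<Rightarrow> stree set \<Rightarrow> stree set pmf" where
  "stopped_step mut F P = (if None \<in> P then return_pmf P else smo_step mut F P)"

fun pop_after :: "(stree \<Rightarrow> stree pmf) \<Rightarrow> (stree \<Rightarrow> real) \<Rightarrow> stree \<Rightarrow> nat \<Rightarrow> stree set pmf" where
  "pop_after mut F X0 0 = return_pmf {X0}"
| "pop_after mut F X0 (Suc t) = bind_pmf (pop_after mut F X0 t) (stopped_step mut F)"

text \<open>Expected number of iterations until the population contains the empty tree,
  E[T] = sum over t of Pr[T > t] (possibly infinite).\<close>
definition expected_time :: "(stree \<Rightarrow> stree pmf) \<Rightarrow> (stree \<Rightarrow> real) \<Rightarrow> stree \<Rightarrow> ennreal" where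
  "expected_time mut F X0 =
     (\<Sum>t. ennreal (measure_pmf.prob (pop_after mut F X0 t) {P. None \<notin> P}))"

end

theory Submission
  imports Defs
begin


lemma lits_subtree: "lits_tr (subtree t p) \<subseteq> lits_tr t"
  by (induction t p rule: subtree.induct) auto

lemma lits_replace: "lits_tr (replace t p s) \<subseteq> lits_tr t \<union> lits_tr s"
  by (induction t p s rule: replace.induct) auto

lemma leafpos_fin: "finite (leafpos t)" by (induction t) auto
lemma leafpos_ne: "leafpos t \<noteq> {}" by (induction t) auto
lemma pos_fin: "finite (pos t)" by (induction t) auto
lemma pos_ne: "pos t \<noteq> {}" by (induction t) auto
lemma term_fin: "finite (terminals n)" by (simp add: terminals_def)
lemma term_ne: "n \<ge> 1 \<Longrightarrow> terminals n \<noteq> {}" by (auto simp: terminals_def)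

lemma nnodes_pos: "nnodes t \<ge> 1" by (cases t) auto
lemma nnodes_ne0[simp]: "nnodes t \<noteq> 0" using nnodes_pos[of t] by linarith
lemma C0: "C X = 0 \<longleftrightarrow> X = None"
  by (cases X) (auto simp: C_def)
lemma valid_Some[simp]: "valid n (Some t) \<longleftrightarrow> lits_tr t \<subseteq> terminals n" by (simp add: valid_def)
lemma valid_None[simp]: "valid n None" by (simp add: valid_def)

lemma del_dec: "p \<in> leafpos t \<Longrightarrow> p \<noteq> [] \<Longrightarrow>
   nnodes (replace t (butlast p) (subtree t (butlast p @ [\<not> last p]))) < nnodes t"
proof (induction t arbitrary: p)
  case (Leaf x) then show ?case by simp
next
  case (J l r)
  from J.prems have "(\<exists>q. p = False # q \<and> q \<in> leafpos l) \<or> (\<exists>q. p = True # q \<and> q \<in> leafpos r)" by auto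
  then obtain b q where p: "p = b # q" and q: "q \<in> (if b then leafpos r else leafpos l)"
    by (metis (full_types))
  show ?case
  proof (cases "q = []")
    case True then show ?thesis using p by (cases b) auto
  next
    case False
    then have bl: "butlast p = b # butlast q" "last p = last q" using p by auto
    show ?thesis using J.IH[of q] q False unfolding bl by (cases b) auto
  qed
qed


lemma valid_replace: "valid n (Some t) \<Longrightarrow> lits_tr s \<subseteq> terminals n \<Longrightarrow> valid n (Some (replace t p s))"
  using lits_replace[of t p s] by (auto simp: valid_def)

lemma valid_subtree: "valid n (Some t) \<Longrightarrow> lits_tr (subtree t p) \<subseteq> terminals n"
  using lits_subtree[of t p] by (auto simp: valid_def)

lemma hvl_valid:
  assumes n: "n \<ge> 1" and v: "valid n X" shows "set_pmf (hvl_prime n X) \<subseteq> {Y. valid n Y}"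
proof -
  have T: "set_pmf (pmf_of_set (terminals n)) = terminals n" using n term_fin term_ne by simp
  have s: "set_pmf (substitute_op n X) \<subseteq> {Y. valid n Y}"
    using v T by (auto simp: substitute_op_def dest!: lits_replace[THEN subsetD] split: option.splits)
  have i: "set_pmf (insert_op n X) \<subseteq> {Y. valid n Y}"
    using v T by (auto simp: insert_op_def dest!: lits_replace[THEN subsetD] lits_subtree[THEN subsetD] split: option.splits if_splits) force+
  have d: "set_pmf (delete_op X) \<subseteq> {Y. valid n Y}"
    using v by (auto simp: delete_op_def dest!: lits_subtree[THEN subsetD] lits_replace[THEN subsetD] split: option.splits)
  show ?thesis using s i d by (auto simp: hvl_prime_def)
qed



lemma hvl_iter_valid: "n \<ge> 1 \<Longrightarrow> valid n X \<Longrightarrow> set_pmf (hvl_iter n k X) \<subseteq> {Y. valid n Y}"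
proof (induction k arbitrary: X)
  case 0 then show ?case by simp
next
  case (Suc k) then show ?case using hvl_valid[of n X] by auto
qed

lemma single_valid: "n \<ge> 1 \<Longrightarrow> valid n X \<Longrightarrow> set_pmf (mutate_single n X) \<subseteq> {Y. valid n Y}"
  unfolding mutate_single_def by (rule hvl_iter_valid)

lemma multi_valid: "n \<ge> 1 \<Longrightarrow> valid n X \<Longrightarrow> set_pmf (mutate_multi n X) \<subseteq> {Y. valid n Y}"
proof -
  assume a: "n \<ge> 1" "valid n X"
  have "\<And>j. set_pmf (hvl_iter n (1 + j) X) \<subseteq> {Y. valid n Y}" using hvl_iter_valid[OF a] .
  then show ?thesis unfolding mutate_multi_def by (auto simp: set_bind_pmf)
qed

lemma delete_dec: "emeasure (measure_pmf (delete_op (Some t))) {Y. C Y < C (Some t)} = 1"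
proof -
  have "set_pmf (delete_op (Some t)) \<subseteq> {Y. C Y < C (Some t)}"
    using leafpos_fin[of t] leafpos_ne[of t] del_dec[of _ t]
    by (auto simp: delete_op_def C_def split: if_splits)
  then show ?thesis
    by (intro measure_pmf.emeasure_eq_1_AE) (auto simp: AE_measure_pmf_iff)
qed

lemma hvl_dec: "emeasure (measure_pmf (hvl_prime n (Some t))) {Y. C Y < C (Some t)} \<ge> 1/3"
proof -
  let ?E = "{Y. C Y < C (Some t)}"
  let ?h = "\<lambda>op::nat. emeasure (measure_pmf (if op = 0 then substitute_op n (Some t) else if op = 1 then insert_op n (Some t) else delete_op (Some t))) ?E"
  have "emeasure (measure_pmf (hvl_prime n (Some t))) ?E = (\<Sum>op\<in>{0,1,2}. ?h op) / 3"
    unfolding hvl_prime_def by (simp add: nn_integral_pmf_of_set)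
  also have "\<dots> \<ge> ?h 2 / 3"
    by (intro divide_right_mono_ennreal) (rule member_le_sum, auto)
  finally show ?thesis using delete_dec[of t] by (simp add: ennreal_divide_times)
qed

lemma single_dec: "emeasure (measure_pmf (mutate_single n (Some t))) {Y. C Y < C (Some t)} \<ge> 1/3"
  using hvl_dec[of n t] by (simp add: mutate_single_def)

lemma multi_dec: "emeasure (measure_pmf (mutate_multi n (Some t))) {Y. C Y < C (Some t)} \<ge> ennreal (exp (-1) / 3)"
proof -
  let ?E = "{Y. C Y < C (Some t)}"
  let ?h = "\<lambda>j. emeasure (measure_pmf (hvl_iter n (1 + j) (Some t))) ?E"
  have "emeasure (measure_pmf (mutate_multi n (Some t))) ?E = (\<integral>\<^sup>+j. ?h j \<partial>poisson_pmf 1)"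
    by (simp add: mutate_multi_def)
  also have "\<dots> \<ge> (\<integral>\<^sup>+j. ?h 0 * indicator {0} j \<partial>poisson_pmf 1)"
    by (intro nn_integral_mono) (auto split: split_indicator)
  also have "(\<integral>\<^sup>+j. ?h 0 * indicator {0} j \<partial>poisson_pmf 1) = ?h 0 * ennreal (exp (-1))"
    by (simp add: emeasure_pmf_single)
  finally have hh: "?h 0 * ennreal (exp (-1)) \<le> emeasure (measure_pmf (mutate_multi n (Some t))) ?E" .
  moreover have "?h 0 \<ge> 1/3" using hvl_dec[of n t] by simp
  have o3: "(1::ennreal)/3 = ennreal (1/3)" using ennreal_divide_numeral[of 1 "num.Bit1 num.One"] by simp
  have e1: "ennreal (exp (-1) / 3) = ennreal (1/3) * ennreal (exp (-1))" by (simp add: ennreal_mult[symmetric])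
  have e2: "ennreal (1/3) * ennreal (exp (-1)) \<le> ?h 0 * ennreal (exp (-1))" using \<open>?h 0 \<ge> 1/3\<close> o3 by (intro mult_right_mono) auto
  have hh2: "ennreal (exp (-1) / 3) \<le> ?h 0 * ennreal (exp (-1))" using e1 e2 by simp
  show ?thesis using order_trans[OF hh2 hh] .

qed



definition pinv :: "nat \<Rightarrow> (stree \<Rightarrow> real) \<Rightarrow> stree set \<Rightarrow> bool" where
  "pinv n F P \<longleftrightarrow> finite P \<and> P \<noteq> {} \<and> P \<subseteq> {X. valid n X} \<and> inj_on F P"

definition g :: "stree set \<Rightarrow> nat" where "g P = Min (C ` P)"

lemma step_inv:
  assumes I: "pinv n F P" and mv: "\<And>X. valid n X \<Longrightarrow> set_pmf (mut X) \<subseteq> {Y. valid n Y}"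
    and Q: "Q \<in> set_pmf (stopped_step mut F P)"
  shows "pinv n F Q \<and> g Q \<le> g P"
proof (cases "None \<in> P")
  case True then show ?thesis using Q I by (simp add: stopped_step_def)
next
  case False
  from I have fin: "finite P" and ne: "P \<noteq> {}" and vP: "P \<subseteq> {X. valid n X}" and inj: "inj_on F P"
    by (auto simp: pinv_def)
  from Q False fin ne obtain X Y where X: "X \<in> P" and Y: "Y \<in> set_pmf (mut X)" and
    Qd: "Q = (if \<exists>Z\<in>P. strictly_dom F Z Y then P else {Z \<in> P. \<not> weakly_dom F Y Z} \<union> {Y})"
    by (auto simp: stopped_step_def smo_step_def)
  show ?thesis
  proof (cases "\<exists>Z\<in>P. strictly_dom F Z Y")
    case True then show ?thesis using Qd I by simp
  next
    case nd: False
    let ?S = "{Z \<in> P. \<not> weakly_dom F Y Z}"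
    have Qe: "Q = ?S \<union> {Y}" using Qd nd by simp
    have vY: "valid n Y" using mv[of X] X vP Y by auto
    have injQ: "inj_on F Q"
    proof -
      have "F Z \<noteq> F Y" if "Z \<in> ?S" for Z
      proof
        assume e: "F Z = F Y"
        with that have "C Y > C Z" by (auto simp: weakly_dom_def)
        with e have "strictly_dom F Z Y" by (auto simp: strictly_dom_def weakly_dom_def)
        with nd that show False by auto
      qed
      note ne = this
      have "inj_on F ?S" using inj by (rule inj_on_subset) auto
      moreover have "F Y \<notin> F ` ?S" using ne by (metis (no_types, lifting) imageE)
      ultimately have "inj_on F (insert Y ?S)" by (simp add: inj_on_insert) blast
      then show ?thesis unfolding Qe by simp
    qed
    have invQ: "pinv n F Q" using fin vY vP injQ unfolding pinv_def Qe by auto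
    have "Min (C ` P) \<in> C ` P" using fin ne by (intro Min_in) auto
    then obtain Xm where Xm: "Xm \<in> P" "C Xm = g P" by (auto simp: g_def)
    have finQ: "finite Q" using fin Qe by auto
    have "g Q \<le> g P"
    proof (cases "Xm \<in> ?S")
      case True
      then have "g Q \<le> C Xm" unfolding g_def using finQ Qe by (intro Min_le) auto
      then show ?thesis using Xm by simp
    next
      case False
      then have "C Y \<le> C Xm" using Xm by (auto simp: weakly_dom_def)
      moreover have "g Q \<le> C Y" unfolding g_def using finQ Qe by (intro Min_le) auto
      ultimately show ?thesis using Xm by simp
    qed
    then show ?thesis using invQ by simp
  qed
qed

lemma inv_card: "pinv n F P \<Longrightarrow> finite (F ` {X. valid n X}) \<Longrightarrow> card P \<le> card (F ` {X. valid n X})"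
  unfolding pinv_def using card_image[of F P] card_mono[of "F ` {X. valid n X}" "F ` P"] by auto

lemma g0: "pinv n F P \<Longrightarrow> g P = 0 \<longleftrightarrow> None \<in> P"
  unfolding pinv_def g_def using C0 by (auto simp: Min_eq_iff)



lemma g_le: "finite Q \<Longrightarrow> Y \<in> Q \<Longrightarrow> g Q \<le> C Y"
  unfolding g_def by (intro Min_le) auto

lemma drift_prob:
  assumes I: "pinv n F P" and nP: "None \<notin> P"
    and md: "\<And>t. valid n (Some t) \<Longrightarrow> emeasure (measure_pmf (mut (Some t))) {Y. C Y < C (Some t)} \<ge> ennreal r"
    and r: "r > 0"
  shows "emeasure (measure_pmf (stopped_step mut F P)) {Q. g Q < g P} \<ge> ennreal (r / card P)"
proof -
  from I have fin: "finite P" and ne: "P \<noteq> {}" and vP: "P \<subseteq> {X. valid n X}"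
    by (auto simp: pinv_def)
  let ?E = "{Q. g Q < g P}"
  let ?f = "\<lambda>X Y. if \<exists>Z\<in>P. strictly_dom F Z Y then P else {Z \<in> P. \<not> weakly_dom F Y Z} \<union> {Y}"
  let ?h = "\<lambda>X. \<integral>\<^sup>+Y. indicator ?E (?f X Y) \<partial>mut X"
  have "emeasure (measure_pmf (stopped_step mut F P)) ?E = (\<integral>\<^sup>+X. ?h X \<partial>pmf_of_set P)"
    using nP by (simp add: stopped_step_def smo_step_def)
  also have "\<dots> = (\<Sum>X\<in>P. ?h X) / card P" using fin ne by (simp add: nn_integral_pmf_of_set)
  finally have eq: "emeasure (measure_pmf (stopped_step mut F P)) ?E = (\<Sum>X\<in>P. ?h X) / card P" .
  have "Min (C ` P) \<in> C ` P" using fin ne by (intro Min_in) auto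
  then obtain Xm where Xm: "Xm \<in> P" "C Xm = g P" by (auto simp: g_def)
  with nP obtain t where t: "Xm = Some t" by (cases Xm) auto
  have vt: "valid n (Some t)" using vP Xm t by blast
  have "?h Xm \<ge> (\<integral>\<^sup>+Y. indicator {Y. C Y < C Xm} Y \<partial>mut Xm)"
  proof (intro nn_integral_mono)
    fix Y
    show "indicator {Y. C Y < C Xm} Y \<le> (indicator ?E (?f Xm Y) :: ennreal)"
    proof (cases "C Y < C Xm")
      case True
      have "\<not> strictly_dom F Z Y" if "Z \<in> P" for Z
        using g_le[OF fin that] True Xm by (auto simp: strictly_dom_def weakly_dom_def)
      then have "?f Xm Y = {Z \<in> P. \<not> weakly_dom F Y Z} \<union> {Y}" by auto
      moreover have "g ({Z \<in> P. \<not> weakly_dom F Y Z} \<union> {Y}) \<le> C Y" using fin by (intro g_le) auto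
      ultimately have "?f Xm Y \<in> ?E" using True Xm by simp
      then show ?thesis using True by (simp add: indicator_def)
    qed simp
  qed
  also have "(\<integral>\<^sup>+Y. indicator {Y. C Y < C Xm} Y \<partial>mut Xm) = emeasure (measure_pmf (mut Xm)) {Y. C Y < C Xm}"
    by simp
  finally have hX: "?h Xm \<ge> ennreal r" using md[OF vt] t by simp
  have "(\<Sum>X\<in>P. ?h X) \<ge> ?h Xm" using fin Xm by (intro member_le_sum) auto
  then have "(\<Sum>X\<in>P. ?h X) / card P \<ge> ennreal r / card P" using hX
    by (intro divide_right_mono_ennreal) simp
  moreover have "ennreal r / card P = ennreal (r / card P)"
    using r fin ne by (simp add: ennreal_of_nat_eq_real_of_nat divide_ennreal card_gt_0_iff)
  ultimately show ?thesis using eq by simp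
qed



lemma drift:
  assumes I: "pinv n F P" and mv: "\<And>X. valid n X \<Longrightarrow> set_pmf (mut X) \<subseteq> {Y. valid n Y}"
    and md: "\<And>t. valid n (Some t) \<Longrightarrow> emeasure (measure_pmf (mut (Some t))) {Y. C Y < C (Some t)} \<ge> ennreal r"
    and r: "r > 0" and K: "card P \<le> K"
  shows "(\<integral>\<^sup>+Q. of_nat (g Q) \<partial>stopped_step mut F P) + ennreal (r / K) * indicator {P. None \<notin> P} P \<le> of_nat (g P)"
proof (cases "None \<in> P")
  case True then show ?thesis by (simp add: stopped_step_def)
next
  case False
  let ?E = "{Q. g Q < g P}"
  let ?M = "stopped_step mut F P"
  have pw: "AE Q in measure_pmf ?M. (of_nat (g Q) + indicator ?E Q :: ennreal) \<le> of_nat (g P)"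
  proof (rule AE_pmfI)
    fix Q assume Q: "Q \<in> set_pmf ?M"
    have "pinv n F Q \<and> g Q \<le> g P" using I mv Q by (rule step_inv)
    then have "g Q \<le> g P" by blast
    then show "(of_nat (g Q) + indicator ?E Q :: ennreal) \<le> of_nat (g P)"
    proof (cases "g Q < g P")
      case True
      then have "Suc (g Q) \<le> g P" by simp
      then have "(of_nat (Suc (g Q)) :: ennreal) \<le> of_nat (g P)" by (rule of_nat_mono)
      then show ?thesis using True by (simp add: indicator_def add.commute)
    next
      case False then show ?thesis using \<open>g Q \<le> g P\<close> by (simp add: indicator_def of_nat_mono)
    qed
  qed
  have "(\<integral>\<^sup>+Q. of_nat (g Q) \<partial>?M) + emeasure (measure_pmf ?M) ?E = (\<integral>\<^sup>+Q. of_nat (g Q) + indicator ?E Q \<partial>?M)"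
    by (subst nn_integral_add) auto
  also have "\<dots> \<le> (\<integral>\<^sup>+Q. of_nat (g P) \<partial>?M)" by (rule nn_integral_mono_AE[OF pw])
  also have "\<dots> = of_nat (g P)" by (simp add: measure_pmf.emeasure_space_1)
  finally have a: "(\<integral>\<^sup>+Q. of_nat (g Q) \<partial>?M) + emeasure (measure_pmf ?M) ?E \<le> of_nat (g P)" .
  have fin: "finite P" and ne: "P \<noteq> {}" using I by (auto simp: pinv_def)
  have "ennreal (r / K) \<le> ennreal (r / card P)"
  proof -
    have "card P > 0" using fin ne by (simp add: card_gt_0_iff)
    then show ?thesis using K r by (intro ennreal_leI divide_left_mono) auto
  qed
  also have "\<dots> \<le> emeasure (measure_pmf ?M) ?E" by (rule drift_prob[OF I False md r])
  finally have b: "ennreal (r / K) \<le> emeasure (measure_pmf ?M) ?E" .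
  have "(\<integral>\<^sup>+Q. of_nat (g Q) \<partial>?M) + ennreal (r / K) \<le> (\<integral>\<^sup>+Q. of_nat (g Q) \<partial>?M) + emeasure (measure_pmf ?M) ?E"
    by (rule add_left_mono[OF b])
  then have "(\<integral>\<^sup>+Q. of_nat (g Q) \<partial>?M) + ennreal (r / K) \<le> of_nat (g P)" using a by (rule order_trans)
  then show ?thesis using False by simp
qed



lemma main:
  assumes n: "n \<ge> 1" and r: "r > 0"
    and mv: "\<And>X. valid n X \<Longrightarrow> set_pmf (mut X) \<subseteq> {Y. valid n Y}"
    and md: "\<And>t. valid n (Some t) \<Longrightarrow> emeasure (measure_pmf (mut (Some t))) {Y. C Y < C (Some t)} \<ge> ennreal r"
    and v0: "valid n X0" and fin: "finite (F ` {X. valid n X})" and kk: "card (F ` {X. valid n X}) \<le> k"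
  shows "expected_time mut F X0 \<le> ennreal (real k * real (C X0) / r)"
proof -
  define K where "K = card (F ` {X. valid n X})"
  have "F None \<in> F ` {X. valid n X}" by simp
  then have K1: "K \<ge> 1" unfolding K_def using fin
    by (metis One_nat_def Suc_leI card_gt_0_iff empty_iff)
  let ?pop = "pop_after mut F X0"
  have sp: "set_pmf (?pop t) \<subseteq> {P. pinv n F P}" for t
  proof (induction t)
    case 0 then show ?case using v0 by (simp add: pinv_def)
  next
    case (Suc t)
    show ?case
    proof
      fix Q assume "Q \<in> set_pmf (?pop (Suc t))"
      then obtain P where P: "P \<in> set_pmf (?pop t)" and Q: "Q \<in> set_pmf (stopped_step mut F P)"
        by (auto simp: set_bind_pmf)
      have I: "pinv n F P" using P Suc by auto
      have "pinv n F Q \<and> g Q \<le> g P" using I mv Q by (rule step_inv)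
      then show "Q \<in> {P. pinv n F P}" by simp
    qed
  qed
  let ?c = "ennreal (r / K)"
  let ?e = "\<lambda>s. emeasure (measure_pmf (?pop s)) {P. None \<notin> P}"
  have main: "(\<integral>\<^sup>+P. of_nat (g P) \<partial>?pop t) + ?c * (\<Sum>s<t. ?e s) \<le> of_nat (C X0)" for t
  proof (induction t)
    case 0 then show ?case by (simp add: g_def)
  next
    case (Suc t)
    have pw: "AE P in measure_pmf (?pop t). (\<integral>\<^sup>+Q. of_nat (g Q) \<partial>stopped_step mut F P) + ?c * indicator {P. None \<notin> P} P \<le> of_nat (g P)"
    proof (rule AE_pmfI)
      fix P assume P: "P \<in> set_pmf (?pop t)"
      then have I: "pinv n F P" using sp by auto
      have "card P \<le> K" unfolding K_def using inv_card[OF I fin] .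
      then show "(\<integral>\<^sup>+Q. of_nat (g Q) \<partial>stopped_step mut F P) + ?c * indicator {P. None \<notin> P} P \<le> of_nat (g P)"
        using drift[OF I mv md r] by blast
    qed
    have "(\<integral>\<^sup>+P. of_nat (g P) \<partial>?pop (Suc t)) + ?c * ?e t =
        (\<integral>\<^sup>+P. (\<integral>\<^sup>+Q. of_nat (g Q) \<partial>stopped_step mut F P) + ?c * indicator {P. None \<notin> P} P \<partial>?pop t)"
      by (simp add: nn_integral_add nn_integral_cmult)
    also have "\<dots> \<le> (\<integral>\<^sup>+P. of_nat (g P) \<partial>?pop t)" by (rule nn_integral_mono_AE[OF pw])
    finally have st: "(\<integral>\<^sup>+P. of_nat (g P) \<partial>?pop (Suc t)) + ?c * ?e t \<le> (\<integral>\<^sup>+P. of_nat (g P) \<partial>?pop t)" .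
    have "(\<integral>\<^sup>+P. of_nat (g P) \<partial>?pop (Suc t)) + ?c * (\<Sum>s<Suc t. ?e s)
        = ((\<integral>\<^sup>+P. of_nat (g P) \<partial>?pop (Suc t)) + ?c * ?e t) + ?c * (\<Sum>s<t. ?e s)"
      by (simp add: distrib_left algebra_simps)
    also have "\<dots> \<le> (\<integral>\<^sup>+P. of_nat (g P) \<partial>?pop t) + ?c * (\<Sum>s<t. ?e s)"
      by (rule add_right_mono[OF st])
    also have "\<dots> \<le> of_nat (C X0)" by (rule Suc.IH)
    finally show ?case .
  qed
  have ps: "?c * (\<Sum>s<t. ?e s) \<le> of_nat (C X0)" for t
    using main[of t] by (rule order_trans[rotated]) simp
  have et: "expected_time mut F X0 = (\<Sum>s. ?e s)"
    unfolding expected_time_def by (simp add: measure_pmf.emeasure_eq_measure)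
  have "?c * (\<Sum>s. ?e s) = (SUP t. ?c * (\<Sum>s<t. ?e s))"
    by (simp add: suminf_eq_SUP SUP_mult_left_ennreal)
  also have "\<dots> \<le> of_nat (C X0)" by (rule SUP_least) (rule ps)
  finally have cs: "?c * (\<Sum>s. ?e s) \<le> of_nat (C X0)" .
  have "(\<Sum>s. ?e s) = ennreal (K / r) * (?c * (\<Sum>s. ?e s))"
    using r K1 by (simp add: mult.assoc[symmetric] ennreal_mult[symmetric])
  also have "\<dots> \<le> ennreal (K / r) * of_nat (C X0)" by (rule mult_left_mono[OF cs]) simp
  also have "\<dots> = ennreal (K * C X0 / r)"
    using r by (simp add: ennreal_of_nat_eq_real_of_nat ennreal_mult[symmetric])
  also have "\<dots> \<le> ennreal (k * C X0 / r)"
  proof -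
    have "real K \<le> real k" using kk unfolding K_def by simp
    then show ?thesis using r by (intro ennreal_leI divide_right_mono) (auto intro: mult_right_mono)
  qed
  finally show ?thesis using et by simp
qed



theorem lemma1:
  "\<exists>c::real. c > 0 \<and>
     (\<forall>(n::nat) (k::nat) (F::stree \<Rightarrow> real) (X0::stree).
        n \<ge> 1 \<longrightarrow> valid n X0 \<longrightarrow>
        finite (F ` {X. valid n X}) \<longrightarrow> card (F ` {X. valid n X}) \<le> k \<longrightarrow>
        expected_time (mutate_single n) F X0 \<le> ennreal (c * real k * real (C X0)) \<and>
        expected_time (mutate_multi n) F X0 \<le> ennreal (c * real k * real (C X0)))"
proof (intro exI[of _ 9] conjI allI impI)
  fix n k and F :: "stree \<Rightarrow> real" and X0
  assume n: "(n::nat) \<ge> 1" and v0: "valid n X0" and fin: "finite (F ` {X. valid n X})"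
    and kk: "card (F ` {X. valid n X}) \<le> k"
  have o3: "(1::ennreal)/3 = ennreal (1/3)" using ennreal_divide_numeral[of 1 "num.Bit1 num.One"] by simp
  have "expected_time (mutate_single n) F X0 \<le> ennreal (real k * real (C X0) / (1/3))"
    using n _ single_valid[OF n] _ v0 fin kk
  proof (rule main)
    fix t show "emeasure (measure_pmf (mutate_single n (Some t))) {Y. C Y < C (Some t)} \<ge> ennreal (1/3)"
      using single_dec[of n t] o3 by simp
  qed simp
  also have "\<dots> \<le> ennreal (9 * real k * real (C X0))"
    by (intro ennreal_leI) simp
  finally show "expected_time (mutate_single n) F X0 \<le> ennreal (9 * real k * real (C X0))" .
  have "expected_time (mutate_multi n) F X0 \<le> ennreal (real k * real (C X0) / (exp (-1) / 3))"
    using n _ multi_valid[OF n] _ v0 fin kk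
  proof (rule main)
    fix t show "emeasure (measure_pmf (mutate_multi n (Some t))) {Y. C Y < C (Some t)} \<ge> ennreal (exp (-1) / 3)"
      by (rule multi_dec)
  qed simp
  also have "\<dots> \<le> ennreal (9 * real k * real (C X0))"
  proof (intro ennreal_leI)
    have "real k * real (C X0) / (exp (-1) / 3) = 3 * exp 1 * (real k * real (C X0))"
      by (simp add: exp_minus field_simps)
    also have "\<dots> \<le> 3 * 3 * (real k * real (C X0))"
      using exp_le by (intro mult_right_mono) auto
    finally show "real k * real (C X0) / (exp (-1) / 3) \<le> 9 * real k * real (C X0)" by simp
  qed
  finally show "expected_time (mutate_multi n) F X0 \<le> ennreal (9 * real k * real (C X0))" .
qed simp

end
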